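(* Let $R$ be a ring and let $I\subseteq J(R)$ be a two-sided ideal of $R$. Then $R$ is a CSNC ring if and only if $I$ is nil and $R/I$ is a CSNC ring.
   Context: All rings are associative with identity $1$. For a ring $R$, $\mathrm{Id}(R)$, $U(R)$, $\mathrm{Nil}(R)$ denote the sets of idempotents, units and nilpotent elements, and $J(R)$ the Jacobson radical. An element $a\in R$ is clean if $a=e+u$ for some $e\in\mathrm{Id}(R)$, $u\in U(R)$. An element $a$ is strongly nil-clean if $a=e+q$ with $e\in \mathrm{Id}(R)$, $q\in\mathrm{Nil}(R)$ and $eq=qe$. A ring $R$ is called CSNC if every clean element of $R$ is strongly nil-clean. An ideal is nil if all its elements are nilpotent. *)

theory Defs
  imports "HOL-Algebra.Algebra"
begin

definition left_ideal :: "'a set \<Rightarrow> ('a, 'b) ring_scheme \<Rightarrow> bool" where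
  "left_ideal I R \<longleftrightarrow> additive_subgroup I R \<and>
     (\<forall>a\<in>I. \<forall>x\<in>carrier R. x \<otimes>\<^bsub>R\<^esub> a \<in> I)"

definition maximal_left_ideal :: "'a set \<Rightarrow> ('a, 'b) ring_scheme \<Rightarrow> bool" where
  "maximal_left_ideal M R \<longleftrightarrow> left_ideal M R \<and> M \<noteq> carrier R \<and>
     (\<forall>N. left_ideal N R \<and> M \<subseteq> N \<longrightarrow> N = M \<or> N = carrier R)"

definition jacobson_radical :: "('a, 'b) ring_scheme \<Rightarrow> 'a set" where
  "jacobson_radical R = carrier R \<inter> \<Inter> {M. maximal_left_ideal M R}"

definition ring_idempotent :: "('a, 'b) ring_scheme \<Rightarrow> 'a \<Rightarrow> bool" where
  "ring_idempotent R e \<longleftrightarrow> e \<in> carrier R \<and> e \<otimes>\<^bsub>R\<^esub> e = e"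

definition ring_nilpotent :: "('a, 'b) ring_scheme \<Rightarrow> 'a \<Rightarrow> bool" where
  "ring_nilpotent R q \<longleftrightarrow> q \<in> carrier R \<and> (\<exists>n::nat. q [^]\<^bsub>R\<^esub> n = \<zero>\<^bsub>R\<^esub>)"

definition clean_elem :: "('a, 'b) ring_scheme \<Rightarrow> 'a \<Rightarrow> bool" where
  "clean_elem R a \<longleftrightarrow> (\<exists>e u. ring_idempotent R e \<and> u \<in> Units R \<and> a = e \<oplus>\<^bsub>R\<^esub> u)"

definition strongly_nil_clean_elem :: "('a, 'b) ring_scheme \<Rightarrow> 'a \<Rightarrow> bool" where
  "strongly_nil_clean_elem R a \<longleftrightarrow> (\<exists>e q. ring_idempotent R e \<and> ring_nilpotent R q \<and>
      e \<otimes>\<^bsub>R\<^esub> q = q \<otimes>\<^bsub>R\<^esub> e \<and> a = e \<oplus>\<^bsub>R\<^esub> q)"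

definition CSNC :: "('a, 'b) ring_scheme \<Rightarrow> bool" where
  "CSNC R \<longleftrightarrow> (\<forall>a\<in>carrier R. clean_elem R a \<longrightarrow> strongly_nil_clean_elem R a)"

definition nil_ideal :: "'a set \<Rightarrow> ('a, 'b) ring_scheme \<Rightarrow> bool" where
  "nil_ideal I R \<longleftrightarrow> (\<forall>x\<in>I. ring_nilpotent R x)"

end

theory Submission
  imports Defs
begin


lemma (in cring) id_A:
  assumes "x \<in> carrier R" "n \<in> carrier R" "t \<in> carrier R"
  shows "(x \<oplus> n\<otimes>t)\<otimes>(x \<oplus> n\<otimes>t) \<ominus> (x \<oplus> n\<otimes>t) = (x\<otimes>x \<ominus> x) \<ominus> n\<otimes>(t\<otimes>t) \<oplus> n\<otimes>n\<otimes>(t\<otimes>t) \<oplus> n\<otimes>t\<otimes>(x \<oplus> x \<ominus> \<one> \<oplus> t)"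
  using assms by algebra
lemma (in cring) id_B:
  assumes "x \<in> carrier R"
  shows "(\<one> \<ominus> x \<ominus> x)\<otimes>(\<one> \<ominus> x \<ominus> x) = \<one> \<oplus> (\<one>\<oplus>\<one>\<oplus>\<one>\<oplus>\<one>)\<otimes>(x\<otimes>x\<ominus>x)"
  using assms by algebra
lemma (in cring) id_C:
  assumes "f \<in> carrier R" "n \<in> carrier R"
  shows "n \<ominus> n\<otimes>(\<one>\<oplus>f\<otimes>n) \<oplus> n\<otimes>n\<otimes>(\<one>\<oplus>f\<otimes>n) = n\<otimes>n\<otimes>(f\<otimes>n \<ominus> (f \<ominus> \<one>))"
  using assms by algebra
lemma (in cring) id_D:
  assumes "x \<in> carrier R"
  shows "x \<oplus> x \<ominus> \<one> \<oplus> (\<one> \<ominus> x \<ominus> x) = \<zero>"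
  using assms by algebra
lemma (in cring) id_t1:
  assumes "f \<in> carrier R" "n \<in> carrier R" "w \<in> carrier R" "c' \<in> carrier R" "t \<in> carrier R"
  shows "(f \<oplus> (n\<otimes>n\<otimes>w)\<otimes>c') \<ominus> n \<otimes> t = f \<oplus> n \<otimes> (n\<otimes>w\<otimes>c' \<ominus> t)"
  using assms by algebra
lemma (in cring) id_t2:
  assumes "n \<in> carrier R" "x \<in> carrier R" "t \<in> carrier R"
  shows "x = (x \<oplus> n\<otimes>t) \<ominus> n \<otimes> t"
  using assms by algebra

lemma (in cring) pow_sq_w:
  assumes "n \<in> carrier R" "w \<in> carrier R"
  shows "(n\<otimes>n\<otimes>w) [^] (K::nat) = n [^] (K + K) \<otimes> w [^] K"
proof -
  have "(n\<otimes>n\<otimes>w) [^] K = (n\<otimes>n) [^] K \<otimes> w [^] K"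
    using assms by (intro nat_pow_distrib) auto
  also have "(n\<otimes>n) [^] K = n [^] K \<otimes> n [^] K"
    using assms by (intro nat_pow_distrib) auto
  also have "\<dots> = n [^] (K + K)" using assms by (simp only: nat_pow_mult)
  finally show ?thesis .
qed

lemma (in cring) lift_aux:
  "x \<in> carrier R \<Longrightarrow> (x\<otimes>x \<ominus> x) [^] ((2::nat)^k) = \<zero> \<Longrightarrow>
    \<exists>f\<in>carrier R. \<exists>c\<in>carrier R. f\<otimes>f = f \<and> x = f \<oplus> (x\<otimes>x \<ominus> x)\<otimes>c"
proof (induction k arbitrary: x)
  case 0
  then have "x\<otimes>x \<ominus> x = \<zero>" by simp
  then show ?case using 0 by (intro bexI[of _ x] bexI[of _ \<zero>]) auto
next
  case (Suc k)
  define n where "n = x\<otimes>x \<ominus> x"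
  define t where "t = \<one> \<ominus> x \<ominus> x"
  define y where "y = x \<oplus> n\<otimes>t"
  define f4 where "f4 = \<one>\<oplus>\<one>\<oplus>\<one>\<oplus>\<one>"
  define w where "w = f4\<otimes>n \<ominus> (f4 \<ominus> \<one>)"
  define K where "K = (2::nat)^k"
  have x: "x \<in> carrier R" by fact
  have nc: "n \<in> carrier R" and tc: "t \<in> carrier R" and yc: "y \<in> carrier R"
    and fc: "f4 \<in> carrier R" and wc: "w \<in> carrier R"
    unfolding n_def y_def w_def t_def f4_def using x by auto
  have eA: "y\<otimes>y \<ominus> y = (x\<otimes>x \<ominus> x) \<ominus> n\<otimes>(t\<otimes>t) \<oplus> n\<otimes>n\<otimes>(t\<otimes>t) \<oplus> n\<otimes>t\<otimes>(x \<oplus> x \<ominus> \<one> \<oplus> t)"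
    unfolding y_def by (rule id_A[OF x nc tc])
  have eD: "x \<oplus> x \<ominus> \<one> \<oplus> t = \<zero>" unfolding t_def by (rule id_D[OF x])
  have eB: "t\<otimes>t = \<one> \<oplus> f4\<otimes>n" unfolding t_def n_def f4_def by (rule id_B[OF x])
  have "y\<otimes>y \<ominus> y = n \<ominus> n\<otimes>(\<one>\<oplus>f4\<otimes>n) \<oplus> n\<otimes>n\<otimes>(\<one>\<oplus>f4\<otimes>n) \<oplus> n\<otimes>t\<otimes>\<zero>"
    unfolding eA eD eB n_def[symmetric] ..
  also have "\<dots> = n\<otimes>n\<otimes>w" unfolding w_def id_C[OF fc nc, symmetric] using nc tc fc by simp
  finally have ny: "y\<otimes>y \<ominus> y = n\<otimes>n\<otimes>w" .
  have nK: "n [^] (K + K) = \<zero>" using Suc.prems(2) unfolding n_def K_def by (simp add: mult_2)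
  have "(y\<otimes>y \<ominus> y) [^] K = \<zero>" unfolding ny pow_sq_w[OF nc wc] nK using wc by simp
  then obtain f c' where f: "f \<in> carrier R" "c' \<in> carrier R" "f\<otimes>f = f"
    and yf: "y = f \<oplus> (y\<otimes>y \<ominus> y)\<otimes>c'"
    using Suc.IH[OF yc] unfolding K_def by blast
  define c where "c = n\<otimes>w\<otimes>c' \<ominus> t"
  have cc: "c \<in> carrier R" unfolding c_def using nc wc f tc by auto
  have "x = y \<ominus> n \<otimes> t" unfolding y_def by (rule id_t2[OF nc x tc])
  also have "y = f \<oplus> (n\<otimes>n\<otimes>w)\<otimes>c'" using yf ny by simp
  also have "(f \<oplus> (n\<otimes>n\<otimes>w)\<otimes>c') \<ominus> n \<otimes> t = f \<oplus> n \<otimes> c"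
    unfolding c_def by (rule id_t1[OF f(1) nc wc f(2) tc])
  finally have "x = f \<oplus> n \<otimes> c" .
  then have "x = f \<oplus> (x\<otimes>x \<ominus> x) \<otimes> c" by (simp only: n_def)
  then show ?case using f cc by (intro bexI[of _ f] bexI[of _ c]) auto
qed

lemma (in cring) id_snc:
  assumes "e \<in> carrier R" "q \<in> carrier R" "m \<in> carrier R" "m \<oplus> \<one> = \<zero>"
  shows "(e\<oplus>q)\<otimes>(e\<oplus>q) \<oplus> m\<otimes>(e\<oplus>q) = q\<otimes>(e\<oplus>e\<oplus>q\<oplus>m) \<oplus> (e\<otimes>e \<oplus> m\<otimes>e)"
proof -
  have "m = \<ominus> \<one>" using assms(3,4) by (metis add.inv_equality one_closed)
  then show ?thesis using assms(1,2) by simp algebra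
qed

definition dcomm :: "('a, 'b) ring_scheme \<Rightarrow> 'a set \<Rightarrow> 'a set" where
  "dcomm R S = {x \<in> carrier R. \<forall>y\<in>carrier R. (\<forall>s\<in>S. y \<otimes>\<^bsub>R\<^esub> s = s \<otimes>\<^bsub>R\<^esub> y) \<longrightarrow> x \<otimes>\<^bsub>R\<^esub> y = y \<otimes>\<^bsub>R\<^esub> x}"

lemma (in ring) dcomm_subring: "subring (dcomm R S) R"
proof (rule subringI)
  show "dcomm R S \<subseteq> carrier R" by (auto simp: dcomm_def)
  show "\<one> \<in> dcomm R S" by (auto simp: dcomm_def)
next
  fix h assume h: "h \<in> dcomm R S"
  then show "\<ominus> h \<in> dcomm R S" by (auto simp: dcomm_def l_minus r_minus)
next
  fix h1 h2 assume "h1 \<in> dcomm R S" "h2 \<in> dcomm R S"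
  then have c: "h1 \<in> carrier R" "h2 \<in> carrier R" and
    h: "\<And>y. y\<in>carrier R \<Longrightarrow> (\<forall>s\<in>S. y \<otimes> s = s \<otimes> y) \<Longrightarrow> h1 \<otimes> y = y \<otimes> h1"
       "\<And>y. y\<in>carrier R \<Longrightarrow> (\<forall>s\<in>S. y \<otimes> s = s \<otimes> y) \<Longrightarrow> h2 \<otimes> y = y \<otimes> h2"
    by (auto simp: dcomm_def)
  show "h1 \<otimes> h2 \<in> dcomm R S" unfolding dcomm_def
  proof (intro CollectI conjI ballI impI)
    show "h1 \<otimes> h2 \<in> carrier R" using c by simp
    fix y assume y: "y \<in> carrier R" "\<forall>s\<in>S. y \<otimes> s = s \<otimes> y"
    have "h1 \<otimes> h2 \<otimes> y = h1 \<otimes> (y \<otimes> h2)" using c y h(2)[OF y] by (simp add: m_assoc)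
    also have "\<dots> = (h1 \<otimes> y) \<otimes> h2" using c y by (simp add: m_assoc)
    also have "\<dots> = (y \<otimes> h1) \<otimes> h2" using h(1)[OF y] by simp
    also have "\<dots> = y \<otimes> (h1 \<otimes> h2)" using c y by (simp add: m_assoc)
    finally show "h1 \<otimes> h2 \<otimes> y = y \<otimes> (h1 \<otimes> h2)" .
  qed
  show "h1 \<oplus> h2 \<in> dcomm R S" using c h unfolding dcomm_def by (auto simp: l_distr r_distr)
qed

lemma (in ring) dcomm_mem: "S \<subseteq> carrier R \<Longrightarrow> s \<in> S \<Longrightarrow> s \<in> dcomm R S"
  unfolding dcomm_def by auto

lemma (in ring) dcomm_comm:
  assumes "S \<subseteq> carrier R" "\<And>s t. s \<in> S \<Longrightarrow> t \<in> S \<Longrightarrow> s \<otimes> t = t \<otimes> s"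
    and "x \<in> dcomm R S" "z \<in> dcomm R S"
  shows "x \<otimes> z = z \<otimes> x"
proof -
  have "\<forall>s\<in>S. z \<otimes> s = s \<otimes> z"
  proof
    fix s assume s: "s \<in> S"
    have "\<forall>t\<in>S. s \<otimes> t = t \<otimes> s" using assms(2) s by blast
    moreover have "s \<in> carrier R" using assms(1) s by blast
    moreover have "\<And>y. y\<in>carrier R \<Longrightarrow> (\<forall>s\<in>S. y \<otimes> s = s \<otimes> y) \<Longrightarrow> z \<otimes> y = y \<otimes> z"
      using assms(4) unfolding dcomm_def by blast
    ultimately show "z \<otimes> s = s \<otimes> z" by blast
  qed
  then show ?thesis using assms(3,4) unfolding dcomm_def by blast
qed

lemma (in ring) dcomm_cring:
  assumes "S \<subseteq> carrier R" "\<And>s t. s \<in> S \<Longrightarrow> t \<in> S \<Longrightarrow> s \<otimes> t = t \<otimes> s"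
  shows "cring (R\<lparr>carrier := dcomm R S\<rparr>)"
proof -
  have "subcring (dcomm R S) R"
    by (rule subcringI[OF dcomm_subring]) (rule dcomm_comm[OF assms])
  then show ?thesis using subcring_iff subringE(1)[OF dcomm_subring] by blast
qed

lemma (in ring) dcomm_a_inv:
  assumes "a \<in> dcomm R S"
  shows "\<ominus>\<^bsub>R\<lparr>carrier := dcomm R S\<rparr>\<^esub> a = \<ominus> a"
proof -
  interpret Q: ring "R\<lparr>carrier := dcomm R S\<rparr>" by (rule subring_is_ring[OF dcomm_subring])
  have a: "a \<in> carrier (R\<lparr>carrier := dcomm R S\<rparr>)" using assms by simp
  have "\<ominus>\<^bsub>R\<lparr>carrier := dcomm R S\<rparr>\<^esub> a \<in> dcomm R S" using Q.a_inv_closed[OF a] by simp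
  then have c: "\<ominus>\<^bsub>R\<lparr>carrier := dcomm R S\<rparr>\<^esub> a \<in> carrier R" using subringE(1)[OF dcomm_subring] by blast
  have "\<ominus>\<^bsub>R\<lparr>carrier := dcomm R S\<rparr>\<^esub> a \<oplus> a = \<zero>" using Q.l_neg[OF a] by simp
  moreover have "a \<in> carrier R" using assms subringE(1)[OF dcomm_subring] by blast
  ultimately show ?thesis using add.inv_equality c by metis
qed

lemma (in ring) dcomm_minus:
  assumes "a \<in> dcomm R S" "b \<in> dcomm R S"
  shows "a \<ominus>\<^bsub>R\<lparr>carrier := dcomm R S\<rparr>\<^esub> b = a \<ominus> b"
  using dcomm_a_inv[OF assms(2)] by (simp add: a_minus_def)

lemma (in ring) pow_comm1:
  assumes "a \<in> carrier R" "b \<in> carrier R" "a \<otimes> b = b \<otimes> a"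
  shows "b [^] (n::nat) \<otimes> a = a \<otimes> b [^] n"
proof (induction n)
  case 0 then show ?case using assms by simp
next
  case (Suc n)
  have "b [^] Suc n \<otimes> a = b [^] n \<otimes> (b \<otimes> a)" using assms by (simp add: m_assoc)
  also have "\<dots> = (b [^] n \<otimes> a) \<otimes> b" using assms by (simp add: m_assoc)
  also have "\<dots> = a \<otimes> b [^] Suc n" using assms Suc by (simp add: m_assoc)
  finally show ?case .
qed

lemma (in ring) pow_mult_comm:
  assumes "a \<in> carrier R" "b \<in> carrier R" "a \<otimes> b = b \<otimes> a"
  shows "(a \<otimes> b) [^] (n::nat) = a [^] n \<otimes> b [^] n"
proof (induction n)
  case 0 then show ?case by simp
next
  case (Suc n)
  have "(a \<otimes> b) [^] Suc n = a [^] n \<otimes> (b [^] n \<otimes> a) \<otimes> b" using assms Suc by (simp add: m_assoc)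
  also have "\<dots> = a [^] Suc n \<otimes> b [^] Suc n" using assms pow_comm1[OF assms, of n] by (simp add: m_assoc)
  finally show ?case .
qed

lemma (in ring) lift_idem:
  assumes x: "x \<in> carrier R" and nil: "ring_nilpotent R (x \<otimes> x \<ominus> x)"
  shows "\<exists>f c. ring_idempotent R f \<and> c \<in> carrier R \<and> x = f \<oplus> (x \<otimes> x \<ominus> x) \<otimes> c
     \<and> f \<otimes> ((x \<otimes> x \<ominus> x) \<otimes> c) = ((x \<otimes> x \<ominus> x) \<otimes> c) \<otimes> f
     \<and> ring_nilpotent R ((x \<otimes> x \<ominus> x) \<otimes> c)"
proof -
  let ?C = "dcomm R {x}"
  let ?Q = "R\<lparr>carrier := ?C\<rparr>"
  have S: "{x} \<subseteq> carrier R" using x by simp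
  have pw: "\<And>s t. s \<in> {x} \<Longrightarrow> t \<in> {x} \<Longrightarrow> s \<otimes> t = t \<otimes> s" by simp
  interpret Q: cring ?Q by (rule dcomm_cring[OF S pw])
  have Csub: "?C \<subseteq> carrier R" by (rule subringE(1)[OF dcomm_subring])
  have xC: "x \<in> ?C" by (rule dcomm_mem[OF S]) simp
  have xxC: "x \<otimes> x \<in> ?C" using xC subringE(6)[OF dcomm_subring] by blast
  define n where "n = x \<otimes> x \<ominus> x"
  have nC: "n \<in> ?C" unfolding n_def a_minus_def
    using xC xxC subringE(5,7)[OF dcomm_subring] by blast
  have nc: "n \<in> carrier R" using nC Csub by blast
  obtain N where N: "n [^] (N::nat) = \<zero>" using nil n_def by (auto simp: ring_nilpotent_def)
  have "N \<le> 2 ^ N" by (simp add: less_imp_le)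
  then have "(2::nat) ^ N = N + (2 ^ N - N)" by simp
  then have "n [^] ((2::nat) ^ N) = n [^] (N + (2 ^ N - N))" by (rule arg_cong)
  also have "\<dots> = n [^] N \<otimes> n [^] (2 ^ N - N)" by (rule nat_pow_mult[symmetric, OF nc])
  also have "\<dots> = \<zero>" using N nc by simp
  finally have n2: "n [^] ((2::nat) ^ N) = \<zero>" .
  have "(x \<otimes>\<^bsub>?Q\<^esub> x \<ominus>\<^bsub>?Q\<^esub> x) [^]\<^bsub>?Q\<^esub> ((2::nat)^N) = \<zero>\<^bsub>?Q\<^esub>"
    using n2 dcomm_minus[OF xxC xC] n_def by (simp add: nat_pow_consistent[symmetric])
  then obtain f c where fc: "f \<in> ?C" "c \<in> ?C" "f \<otimes> f = f"
    and xf: "x = f \<oplus> (x \<otimes>\<^bsub>?Q\<^esub> x \<ominus>\<^bsub>?Q\<^esub> x) \<otimes> c"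
    using Q.lift_aux[of x N] xC by auto
  have xf': "x = f \<oplus> n \<otimes> c" using xf dcomm_minus[OF xxC xC] n_def by simp
  have qC: "n \<otimes> c \<in> ?C" using nC fc subringE(6)[OF dcomm_subring] by blast
  have fcomm: "f \<otimes> (n \<otimes> c) = (n \<otimes> c) \<otimes> f" by (rule dcomm_comm[OF S pw fc(1) qC])
  have nccomm: "n \<otimes> c = c \<otimes> n" by (rule dcomm_comm[OF S pw nC fc(2)])
  have cc: "c \<in> carrier R" "f \<in> carrier R" using fc Csub by auto
  have "(n \<otimes> c) [^] ((2::nat)^N) = \<zero>"
    using pow_mult_comm[OF nc cc(1) nccomm] n2 cc nc by simp
  then have "ring_nilpotent R (n \<otimes> c)" unfolding ring_nilpotent_def using nc cc by blast
  moreover have "ring_idempotent R f" unfolding ring_idempotent_def using cc fc by simp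
  ultimately show ?thesis using xf' fcomm cc unfolding n_def by blast
qed

lemma (in ring) snc_char:
  assumes a: "a \<in> carrier R"
  shows "strongly_nil_clean_elem R a \<longleftrightarrow> ring_nilpotent R (a \<otimes> a \<ominus> a)"
proof
  assume "ring_nilpotent R (a \<otimes> a \<ominus> a)"
  from lift_idem[OF a this] obtain f c where
    "ring_idempotent R f" "c \<in> carrier R" "a = f \<oplus> (a \<otimes> a \<ominus> a) \<otimes> c"
    "f \<otimes> ((a \<otimes> a \<ominus> a) \<otimes> c) = ((a \<otimes> a \<ominus> a) \<otimes> c) \<otimes> f"
    "ring_nilpotent R ((a \<otimes> a \<ominus> a) \<otimes> c)" by blast
  then show "strongly_nil_clean_elem R a" unfolding strongly_nil_clean_elem_def by blast
next
  assume "strongly_nil_clean_elem R a"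
  then obtain e q where e: "ring_idempotent R e" and q: "ring_nilpotent R q"
    and eq: "e \<otimes> q = q \<otimes> e" and aeq: "a = e \<oplus> q"
    unfolding strongly_nil_clean_elem_def by blast
  have ec: "e \<in> carrier R" "e \<otimes> e = e" using e by (auto simp: ring_idempotent_def)
  obtain N where qc: "q \<in> carrier R" and qN: "q [^] (N::nat) = \<zero>" using q by (auto simp: ring_nilpotent_def)
  let ?S = "{e, q}"
  let ?C = "dcomm R ?S"
  have S: "?S \<subseteq> carrier R" using ec qc by simp
  have pw: "\<And>s t. s \<in> ?S \<Longrightarrow> t \<in> ?S \<Longrightarrow> s \<otimes> t = t \<otimes> s" using eq by auto
  interpret Q: cring "R\<lparr>carrier := ?C\<rparr>" by (rule dcomm_cring[OF S pw])
  have Csub: "?C \<subseteq> carrier R" by (rule subringE(1)[OF dcomm_subring])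
  have eC: "e \<in> ?C" and qC: "q \<in> ?C" using dcomm_mem[OF S] by auto
  define m where "m = \<ominus> \<one>"
  have mC: "m \<in> ?C" unfolding m_def using subringE(3,5)[OF dcomm_subring] by blast
  have mc: "m \<in> carrier R" "m \<oplus> \<one> = \<zero>" unfolding m_def by (auto simp: l_neg)
  have idQ: "(e\<oplus>q)\<otimes>(e\<oplus>q) \<oplus> m\<otimes>(e\<oplus>q) = q\<otimes>(e\<oplus>e\<oplus>q\<oplus>m) \<oplus> (e\<otimes>e \<oplus> m\<otimes>e)"
    using Q.id_snc[of e q m] eC qC mC mc by simp
  have m1: "\<And>y. y \<in> carrier R \<Longrightarrow> m \<otimes> y = \<ominus> y" unfolding m_def by (simp add: l_minus)
  define w where "w = e\<oplus>e\<oplus>q\<oplus>m"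
  have wC: "w \<in> ?C" unfolding w_def using eC qC mC subringE(7)[OF dcomm_subring] by blast
  have wc: "w \<in> carrier R" using wC Csub by blast
  have "a \<otimes> a \<ominus> a = q \<otimes> w"
    using idQ aeq ec qc m1 mc unfolding w_def by (simp add: a_minus_def r_neg)
  moreover have "q \<otimes> w = w \<otimes> q" by (rule dcomm_comm[OF S pw qC wC])
  ultimately have "(a \<otimes> a \<ominus> a) [^] N = \<zero>"
    using pow_mult_comm[OF qc wc, of N] qN wc by simp
  then show "ring_nilpotent R (a \<otimes> a \<ominus> a)" unfolding ring_nilpotent_def using a by blast
qed

lemma (in ring_hom_ring) hom_idem: "ring_idempotent R e \<Longrightarrow> ring_idempotent S (h e)"
  unfolding ring_idempotent_def using hom_mult[of e e] by simp

lemma (in ring_hom_ring) hom_nil: "ring_nilpotent R q \<Longrightarrow> ring_nilpotent S (h q)"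
proof -
  assume "ring_nilpotent R q"
  then obtain n where q: "q \<in> carrier R" "q [^] (n::nat) = \<zero>" unfolding ring_nilpotent_def by blast
  then have "(h q) [^]\<^bsub>S\<^esub> n = \<zero>\<^bsub>S\<^esub>" using hom_nat_pow[OF q(1), of n] by simp
  then show ?thesis unfolding ring_nilpotent_def using q hom_closed by blast
qed

lemma (in ring_hom_ring) hom_unit: "u \<in> Units R \<Longrightarrow> h u \<in> Units S"
proof -
  assume "u \<in> Units R"
  then obtain v where uv: "u \<in> carrier R" "v \<in> carrier R" "v \<otimes> u = \<one>" "u \<otimes> v = \<one>"
    unfolding Units_def by blast
  then have "h v \<otimes>\<^bsub>S\<^esub> h u = \<one>\<^bsub>S\<^esub>" "h u \<otimes>\<^bsub>S\<^esub> h v = \<one>\<^bsub>S\<^esub>"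
    using hom_mult[of v u] hom_mult[of u v] by auto
  then show "h u \<in> Units S" unfolding Units_def using uv by auto
qed

lemma (in ring_hom_ring) hom_clean: "clean_elem R a \<Longrightarrow> clean_elem S (h a)"
proof -
  assume "clean_elem R a"
  then obtain e u where eu: "ring_idempotent R e" "u \<in> Units R" "a = e \<oplus> u"
    unfolding clean_elem_def by blast
  then have "h a = h e \<oplus>\<^bsub>S\<^esub> h u" using hom_add[of e u] R.Units_closed
    by (auto simp: ring_idempotent_def)
  then show ?thesis unfolding clean_elem_def using hom_idem hom_unit eu by blast
qed

lemma (in ring_hom_ring) hom_snc: "strongly_nil_clean_elem R a \<Longrightarrow> strongly_nil_clean_elem S (h a)"
proof -
  assume "strongly_nil_clean_elem R a"
  then obtain e q where eq: "ring_idempotent R e" "ring_nilpotent R q" "e \<otimes> q = q \<otimes> e" "a = e \<oplus> q"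
    unfolding strongly_nil_clean_elem_def by blast
  have c: "e \<in> carrier R" "q \<in> carrier R" using eq by (auto simp: ring_idempotent_def ring_nilpotent_def)
  have "h a = h e \<oplus>\<^bsub>S\<^esub> h q" using hom_add[OF c] eq by simp
  moreover have "h e \<otimes>\<^bsub>S\<^esub> h q = h q \<otimes>\<^bsub>S\<^esub> h e" using hom_mult[OF c] hom_mult[OF c(2,1)] eq by simp
  ultimately show ?thesis unfolding strongly_nil_clean_elem_def using hom_idem hom_nil eq by blast
qed

lemma (in ring) max_left_ideal_exists:
  assumes L: "left_ideal L R" and one: "\<one> \<notin> L"
  shows "\<exists>M. maximal_left_ideal M R \<and> L \<subseteq> M"
proof -
  define A where "A = {N. left_ideal N R \<and> L \<subseteq> N \<and> \<one> \<notin> N}"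
  have "\<exists>M\<in>A. \<forall>Xq\<in>A. M \<subseteq> Xq \<longrightarrow> Xq = M"
  proof (rule subset_Zorn_nonempty)
    show "A \<noteq> {}" using L one unfolding A_def by blast
  next
    fix C assume C: "C \<noteq> {}" "subset.chain A C"
    have CA: "C \<subseteq> A" and ch: "\<And>Xq Y. Xq \<in> C \<Longrightarrow> Y \<in> C \<Longrightarrow> Xq \<subseteq> Y \<or> Y \<subseteq> Xq"
      using C(2) unfolding subset.chain_def A_def by auto
    have lid: "\<And>N. N \<in> C \<Longrightarrow> additive_subgroup N R"
      and lm: "\<And>N a x. N \<in> C \<Longrightarrow> a \<in> N \<Longrightarrow> x \<in> carrier R \<Longrightarrow> x \<otimes> a \<in> N"
      using CA unfolding left_ideal_def A_def by blast+
    have sub: "\<Union>C \<subseteq> carrier R" using lid additive_subgroup.a_subset by blast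
    have "subgroup (\<Union>C) (add_monoid R)"
    proof (rule add.subgroupI)
      show "\<Union>C \<subseteq> carrier R" by (rule sub)
      obtain N where "N \<in> C" using C(1) by blast
      then have "\<zero> \<in> N" using lid additive_subgroup.zero_closed by blast
      then show "\<Union>C \<noteq> {}" using \<open>N \<in> C\<close> by blast
    next
      fix a assume "a \<in> \<Union>C"
      then obtain N where N: "N \<in> C" "a \<in> N" by blast
      have "\<ominus> a \<in> N" by (rule additive_subgroup.a_inv_closed[OF lid[OF N(1)] N(2)])
      then show "\<ominus> a \<in> \<Union>C" using N(1) by blast
    next
      fix a b assume "a \<in> \<Union>C" "b \<in> \<Union>C"
      then obtain N1 N2 where N: "N1 \<in> C" "a \<in> N1" "N2 \<in> C" "b \<in> N2" by blast
      show "a \<oplus> b \<in> \<Union>C"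
      proof (cases "N1 \<subseteq> N2")
        case True
        then have "a \<oplus> b \<in> N2" using additive_subgroup.a_closed[OF lid[OF N(3)]] N by blast
        then show ?thesis using N(3) by blast
      next
        case False
        then have "N2 \<subseteq> N1" using ch N by blast
        then have "a \<oplus> b \<in> N1" using additive_subgroup.a_closed[OF lid[OF N(1)]] N by blast
        then show ?thesis using N(1) by blast
      qed
    qed
    then have "additive_subgroup (\<Union>C) R" by (rule additive_subgroupI)
    moreover have "\<forall>a\<in>\<Union>C. \<forall>x\<in>carrier R. x \<otimes> a \<in> \<Union>C" using lm by blast
    moreover have "L \<subseteq> \<Union>C" using C(1) CA unfolding A_def by blast
    moreover have "\<one> \<notin> \<Union>C" using CA unfolding A_def by blast
    ultimately show "\<Union>C \<in> A" unfolding left_ideal_def A_def by blast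
  qed
  then obtain M where M: "M \<in> A" "\<And>Xq. Xq \<in> A \<Longrightarrow> M \<subseteq> Xq \<Longrightarrow> Xq = M" by blast
  have "maximal_left_ideal M R"
    unfolding maximal_left_ideal_def
  proof (intro conjI allI impI)
    show "left_ideal M R" using M unfolding A_def by blast
    show "M \<noteq> carrier R" using M unfolding A_def by auto
    fix N assume N: "left_ideal N R \<and> M \<subseteq> N"
    show "N = M \<or> N = carrier R"
    proof (cases "\<one> \<in> N")
      case True
      have "N \<subseteq> carrier R" using N additive_subgroup.a_subset unfolding left_ideal_def by blast
      moreover have "carrier R \<subseteq> N"
      proof
        fix a assume "a \<in> carrier R"
        then have "a \<otimes> \<one> \<in> N" using N True unfolding left_ideal_def by blast
        then show "a \<in> N" using \<open>a \<in> carrier R\<close> by simp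
      qed
      ultimately show ?thesis by blast
    next
      case False
      then have "N \<in> A" using N M unfolding A_def by blast
      then show ?thesis using M N by blast
    qed
  qed
  moreover have "L \<subseteq> M" using M(1) unfolding A_def by blast
  ultimately show ?thesis by blast
qed

lemma (in ring) jac_left_inv:
  assumes x: "x \<in> jacobson_radical R"
  shows "\<exists>y\<in>carrier R. y \<otimes> (\<one> \<oplus> x) = \<one>"
proof (rule ccontr)
  assume no: "\<not> (\<exists>y\<in>carrier R. y \<otimes> (\<one> \<oplus> x) = \<one>)"
  have xc: "x \<in> carrier R" using x unfolding jacobson_radical_def by blast
  define u where "u = \<one> \<oplus> x"
  have uc: "u \<in> carrier R" unfolding u_def using xc by simp
  let ?L = "{y \<otimes> u | y. y \<in> carrier R}"
  have "subgroup ?L (add_monoid R)"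
  proof (rule add.subgroupI)
    show "?L \<subseteq> carrier R" using uc by auto
    show "?L \<noteq> {}" by blast
  next
    fix a assume "a \<in> ?L"
    then obtain y where y: "y \<in> carrier R" "a = y \<otimes> u" by blast
    then have "\<ominus> a = (\<ominus> y) \<otimes> u" using uc by (simp add: l_minus)
    then show "\<ominus> a \<in> ?L" using y by blast
  next
    fix a b assume "a \<in> ?L" "b \<in> ?L"
    then obtain y z where y: "y \<in> carrier R" "a = y \<otimes> u" "z \<in> carrier R" "b = z \<otimes> u" by blast
    then have "a \<oplus> b = (y \<oplus> z) \<otimes> u" using uc by (simp add: l_distr)
    then show "a \<oplus> b \<in> ?L" using y by blast
  qed
  then have "additive_subgroup ?L R" by (rule additive_subgroupI)
  moreover have "\<forall>a\<in>?L. \<forall>r\<in>carrier R. r \<otimes> a \<in> ?L"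
  proof (intro ballI)
    fix a r assume "a \<in> ?L" "r \<in> carrier R"
    then obtain y where y: "y \<in> carrier R" "a = y \<otimes> u" by blast
    then have "r \<otimes> a = (r \<otimes> y) \<otimes> u" using uc \<open>r \<in> carrier R\<close> by (simp add: m_assoc)
    then show "r \<otimes> a \<in> ?L" using y \<open>r \<in> carrier R\<close> by blast
  qed
  ultimately have L: "left_ideal ?L R" unfolding left_ideal_def by blast
  have "\<one> \<notin> ?L" using no unfolding u_def by auto
  then obtain M where M: "maximal_left_ideal M R" "?L \<subseteq> M"
    using max_left_ideal_exists[OF L] by blast
  have Ma: "additive_subgroup M R" and Ml: "\<forall>a\<in>M. \<forall>r\<in>carrier R. r \<otimes> a \<in> M"
    and Mne: "M \<noteq> carrier R"
    using M(1) unfolding maximal_left_ideal_def left_ideal_def by blast+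
  have "u \<in> M" using M(2) uc by (metis (mono_tags, lifting) l_one mem_Collect_eq one_closed subsetD)
  moreover have "x \<in> M" using x M(1) unfolding jacobson_radical_def by blast
  ultimately have "u \<oplus> \<ominus> x \<in> M"
    using additive_subgroup.a_closed[OF Ma] additive_subgroup.a_inv_closed[OF Ma] by blast
  moreover have "u \<oplus> \<ominus> x = \<one>" unfolding u_def using xc by (simp add: add.m_assoc r_neg)
  ultimately have one: "\<one> \<in> M" by simp
  have "carrier R \<subseteq> M"
  proof
    fix a assume "a \<in> carrier R"
    then have "a \<otimes> \<one> \<in> M" using Ml one by blast
    then show "a \<in> M" using \<open>a \<in> carrier R\<close> by simp
  qed
  moreover have "M \<subseteq> carrier R" using Ma additive_subgroup.a_subset by blast
  ultimately show False using Mne by blast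
qed

lemma (in ring) one_plus_unit:
  assumes I: "ideal I R" and IJ: "I \<subseteq> jacobson_radical R" and x: "x \<in> I"
  shows "\<one> \<oplus> x \<in> Units R"
proof -
  have xc: "x \<in> carrier R" using x ideal.Icarr[OF I] by blast
  obtain y where y: "y \<in> carrier R" "y \<otimes> (\<one> \<oplus> x) = \<one>" using jac_left_inv x IJ by blast
  define x' where "x' = \<ominus> (y \<otimes> x)"
  have x'I: "x' \<in> I" unfolding x'_def using ideal.I_l_closed[OF I x y(1)]
    additive_subgroup.a_inv_closed[OF ideal.axioms(1)[OF I]] by blast
  have x'c: "x' \<in> carrier R" unfolding x'_def using y xc by simp
  have "y \<oplus> y \<otimes> x = \<one>" using y xc by (simp add: r_distr)
  then have "\<one> \<oplus> x' = (y \<oplus> y \<otimes> x) \<oplus> x'" by simp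
  also have "\<dots> = y" unfolding x'_def using y xc by (simp add: add.m_assoc r_neg)
  finally have yeq: "y = \<one> \<oplus> x'" by simp
  obtain z where z: "z \<in> carrier R" "z \<otimes> (\<one> \<oplus> x') = \<one>" using jac_left_inv x'I IJ by blast
  have zy: "z \<otimes> y = \<one>" using z yeq by simp
  have "z = z \<otimes> (y \<otimes> (\<one> \<oplus> x))" using y z by simp
  also have "\<dots> = (z \<otimes> y) \<otimes> (\<one> \<oplus> x)" using y z xc by (simp add: m_assoc)
  also have "\<dots> = \<one> \<oplus> x" using zy xc by simp
  finally have "(\<one> \<oplus> x) \<otimes> y = \<one>" using zy by simp
  then show ?thesis unfolding Units_def using y xc by auto
qed

lemma (in ring) unit_plus:
  assumes I: "ideal I R" and IJ: "I \<subseteq> jacobson_radical R" and u: "u \<in> Units R" and x: "x \<in> I"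
  shows "u \<oplus> x \<in> Units R"
proof -
  have xc: "x \<in> carrier R" using x ideal.Icarr[OF I] by blast
  have uc: "u \<in> carrier R" "inv u \<in> carrier R" using u by auto
  have iI: "inv u \<otimes> x \<in> I" using ideal.I_l_closed[OF I x uc(2)] .
  have "u \<otimes> (\<one> \<oplus> inv u \<otimes> x) = u \<oplus> u \<otimes> (inv u \<otimes> x)" using uc xc by (simp add: r_distr)
  also have "u \<otimes> (inv u \<otimes> x) = x" using u uc xc by (simp add: m_assoc[symmetric])
  finally have eq: "u \<oplus> x = u \<otimes> (\<one> \<oplus> inv u \<otimes> x)" by simp
  show ?thesis unfolding eq using u one_plus_unit[OF I IJ iI] by (rule Units_m_closed)
qed

lemma (in ring) two_sided_unit:
  assumes a: "a \<in> carrier R" and b: "b \<in> carrier R" "b \<otimes> a \<in> Units R"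
    and b': "b' \<in> carrier R" "a \<otimes> b' \<in> Units R"
  shows "a \<in> Units R"
proof -
  define p where "p = inv (b \<otimes> a) \<otimes> b"
  define r where "r = b' \<otimes> inv (a \<otimes> b')"
  have pc: "p \<in> carrier R" and rc: "r \<in> carrier R" unfolding p_def r_def using b b' by auto
  have pa: "p \<otimes> a = \<one>" unfolding p_def using a b by (simp add: m_assoc)
  have ar: "a \<otimes> r = \<one>" unfolding r_def using a b' by (simp add: m_assoc[symmetric])
  have "p = p \<otimes> (a \<otimes> r)" using ar pc by simp
  also have "\<dots> = (p \<otimes> a) \<otimes> r" using pc a rc by (simp add: m_assoc)
  also have "\<dots> = r" using pa rc by simp
  finally have "a \<otimes> p = \<one>" using ar by simp
  then show ?thesis unfolding Units_def using a pc pa by auto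
qed

lemma (in ring) Units_pow: "u \<in> Units R \<Longrightarrow> u [^] (n::nat) \<in> Units R"
  by (induction n) auto

lemma (in ring) plus_minus_cancel: "a \<in> carrier R \<Longrightarrow> b \<in> carrier R \<Longrightarrow> b \<oplus> (a \<ominus> b) = a"
  by (simp add: a_minus_def add.m_lcomm r_neg)

lemma (in ideal) quot_car: "Xq \<in> carrier (R Quot I) \<Longrightarrow> \<exists>a\<in>carrier R. Xq = I +> a"
  unfolding FactRing_def A_RCOSETS_def' by auto

lemma (in ideal) quot_eq: "a \<in> carrier R \<Longrightarrow> b \<in> carrier R \<Longrightarrow> (I +> a = I +> b) \<longleftrightarrow> a \<ominus> b \<in> I"
  using quotient_eq_iff_same_a_r_cos[OF is_ideal] by blast

lemma (in ideal) quot_zero: "a \<in> carrier R \<Longrightarrow> (I +> a = \<zero>\<^bsub>R Quot I\<^esub>) \<longleftrightarrow> a \<in> I"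
  unfolding FactRing_def using rcos_const_imp_mem a_rcos_zero[OF is_ideal] by auto

lemma (in ideal) dirA:
  assumes cs: "CSNC R" and IJ: "I \<subseteq> jacobson_radical R"
  shows "nil_ideal I R"
  unfolding nil_ideal_def
proof
  fix x assume x: "x \<in> I"
  have xc: "x \<in> carrier R" using Icarr[OF x] .
  define u where "u = \<one> \<oplus> x"
  have uU: "u \<in> Units R" unfolding u_def by (rule one_plus_unit[OF is_ideal IJ x])
  have uc: "u \<in> carrier R" unfolding u_def using xc by simp
  have "ring_idempotent R \<zero>" unfolding ring_idempotent_def by simp
  moreover have "u = \<zero> \<oplus> u" using uc by simp
  ultimately have "clean_elem R u" unfolding clean_elem_def using uU by blast
  then have "strongly_nil_clean_elem R u" using cs uc unfolding CSNC_def by blast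
  then have "ring_nilpotent R (u \<otimes> u \<ominus> u)" using snc_char[OF uc] by blast
  moreover have "u \<otimes> u \<ominus> u = u \<otimes> x"
  proof -
    have "u \<otimes> u = u \<oplus> u \<otimes> x" unfolding u_def using xc by (simp add: r_distr)
    then have "u \<otimes> u \<ominus> u = (u \<otimes> x \<oplus> u) \<ominus> u" using uc xc add.m_comm by simp
    also have "\<dots> = u \<otimes> x" using uc xc by (simp add: a_minus_def add.m_assoc r_neg)
    finally show ?thesis .
  qed
  ultimately obtain N where N: "(u \<otimes> x) [^] (N::nat) = \<zero>" unfolding ring_nilpotent_def by auto
  have comm: "u \<otimes> x = x \<otimes> u" unfolding u_def using xc by (simp add: l_distr r_distr)
  have "u [^] N \<otimes> x [^] N = \<zero>" using N pow_mult_comm[OF uc xc comm] by simp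
  then have "inv (u [^] N) \<otimes> (u [^] N \<otimes> x [^] N) = \<zero>" using Units_pow[OF uU] by auto
  have uN: "u [^] N \<in> Units R" by (rule Units_pow[OF uU])
  then have uNc: "u [^] N \<in> carrier R" "inv (u [^] N) \<in> carrier R" by auto
  have xNc: "x [^] N \<in> carrier R" using xc by simp
  have "x [^] N = (inv (u [^] N) \<otimes> u [^] N) \<otimes> x [^] N" using uN xNc by simp
  also have "\<dots> = inv (u [^] N) \<otimes> (u [^] N \<otimes> x [^] N)" using uNc xNc by (simp add: m_assoc)
  finally have "x [^] N = \<zero>" using \<open>inv (u [^] N) \<otimes> (u [^] N \<otimes> x [^] N) = \<zero>\<close> by simp
  then show "ring_nilpotent R x" unfolding ring_nilpotent_def using xc by blast
qed

lemma (in ideal) dirC: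
  assumes nil: "nil_ideal I R" and cs: "CSNC (R Quot I)"
  shows "CSNC R"
  unfolding CSNC_def
proof (intro ballI impI)
  interpret h: ring_hom_ring R "R Quot I" "(+>) I" by (rule rcos_ring_hom_ring)
  fix a assume a: "a \<in> carrier R" and cl: "clean_elem R a"
  have "clean_elem (R Quot I) (I +> a)" by (rule h.hom_clean[OF cl])
  then have "strongly_nil_clean_elem (R Quot I) (I +> a)" using cs h.hom_closed[OF a] unfolding CSNC_def by blast
  then have "ring_nilpotent (R Quot I) ((I +> a) \<otimes>\<^bsub>R Quot I\<^esub> (I +> a) \<ominus>\<^bsub>R Quot I\<^esub> (I +> a))"
    using ring.snc_char[OF quotient_is_ring] h.hom_closed[OF a] by blast
  moreover have "(I +> a) \<otimes>\<^bsub>R Quot I\<^esub> (I +> a) \<ominus>\<^bsub>R Quot I\<^esub> (I +> a) = I +> (a \<otimes> a \<ominus> a)"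
    using a by (simp add: a_minus_def)
  ultimately obtain N where "(I +> (a \<otimes> a \<ominus> a)) [^]\<^bsub>R Quot I\<^esub> (N::nat) = \<zero>\<^bsub>R Quot I\<^esub>"
    unfolding ring_nilpotent_def by auto
  then have "I +> ((a \<otimes> a \<ominus> a) [^] N) = \<zero>\<^bsub>R Quot I\<^esub>" using h.hom_nat_pow a by simp
  then have "(a \<otimes> a \<ominus> a) [^] N \<in> I" using quot_zero a by simp
  then obtain K where "((a \<otimes> a \<ominus> a) [^] N) [^] (K::nat) = \<zero>" using nil unfolding nil_ideal_def ring_nilpotent_def by blast
  then have "(a \<otimes> a \<ominus> a) [^] (N * K) = \<zero>" using a by (simp add: nat_pow_pow)
  then have "ring_nilpotent R (a \<otimes> a \<ominus> a)" unfolding ring_nilpotent_def using a by blast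
  then show "strongly_nil_clean_elem R a" using snc_char[OF a] by blast
qed

lemma (in ideal) dirB:
  assumes cs: "CSNC R" and IJ: "I \<subseteq> jacobson_radical R"
  shows "CSNC (R Quot I)"
  unfolding CSNC_def
proof (intro ballI impI)
  interpret h: ring_hom_ring R "R Quot I" "(+>) I" by (rule rcos_ring_hom_ring)
  have nil: "nil_ideal I R" by (rule dirA[OF cs IJ])
  fix Xq assume Xq: "Xq \<in> carrier (R Quot I)" and cl: "clean_elem (R Quot I) Xq"
  then obtain E U where EU: "ring_idempotent (R Quot I) E" "U \<in> Units (R Quot I)" "Xq = E \<oplus>\<^bsub>R Quot I\<^esub> U"
    unfolding clean_elem_def by blast
  obtain a where a: "a \<in> carrier R" "Xq = I +> a" using quot_car Xq by blast
  have Ec: "E \<in> carrier (R Quot I)" using EU(1) unfolding ring_idempotent_def by blast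
  obtain e where e: "e \<in> carrier R" "E = I +> e" using quot_car Ec by blast
  have Uc: "U \<in> carrier (R Quot I)" using EU(2) unfolding Units_def by blast
  obtain u where u: "u \<in> carrier R" "U = I +> u" using quot_car Uc by blast
  obtain V where V: "V \<in> carrier (R Quot I)" "V \<otimes>\<^bsub>R Quot I\<^esub> U = \<one>\<^bsub>R Quot I\<^esub>" "U \<otimes>\<^bsub>R Quot I\<^esub> V = \<one>\<^bsub>R Quot I\<^esub>"
    using EU(2) unfolding Units_def by blast
  obtain v where v: "v \<in> carrier R" "V = I +> v" using quot_car V by blast
  have "I +> (e \<otimes> e) = (I +> e) \<otimes>\<^bsub>R Quot I\<^esub> (I +> e)" by (rule h.hom_mult[OF e(1) e(1)])
  also have "\<dots> = I +> e" using EU e unfolding ring_idempotent_def by simp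
  finally have "I +> (e \<otimes> e) = I +> e" .
  then have eeI: "e \<otimes> e \<ominus> e \<in> I" using quot_eq[OF m_closed[OF e(1) e(1)] e(1)] by blast
  then have "ring_nilpotent R (e \<otimes> e \<ominus> e)" using nil unfolding nil_ideal_def by blast
  then obtain f c where f: "ring_idempotent R f" "c \<in> carrier R" "e = f \<oplus> (e \<otimes> e \<ominus> e) \<otimes> c"
    using lift_idem[OF e(1)] by blast
  define q where "q = (e \<otimes> e \<ominus> e) \<otimes> c"
  have qI: "q \<in> I" unfolding q_def using I_r_closed[OF eeI f(2)] .
  have eq: "e = f \<oplus> q" unfolding q_def by (rule f(3))
  have fc: "f \<in> carrier R" using f unfolding ring_idempotent_def by blast
  have qc: "q \<in> carrier R" using Icarr[OF qI] .
  have "I +> (v \<otimes> u) = (I +> v) \<otimes>\<^bsub>R Quot I\<^esub> (I +> u)" by (rule h.hom_mult[OF v(1) u(1)])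
  also have "\<dots> = \<one>\<^bsub>R Quot I\<^esub>" unfolding v(2)[symmetric] u(2)[symmetric] by (rule V(2))
  also have "\<dots> = I +> \<one>" by (rule h.hom_one[symmetric])
  finally have "I +> (v \<otimes> u) = I +> \<one>" .
  then have vuI: "v \<otimes> u \<ominus> \<one> \<in> I" using quot_eq[OF m_closed[OF v(1) u(1)] one_closed] by blast
  have "I +> (u \<otimes> v) = (I +> u) \<otimes>\<^bsub>R Quot I\<^esub> (I +> v)" by (rule h.hom_mult[OF u(1) v(1)])
  also have "\<dots> = \<one>\<^bsub>R Quot I\<^esub>" unfolding v(2)[symmetric] u(2)[symmetric] by (rule V(3))
  also have "\<dots> = I +> \<one>" by (rule h.hom_one[symmetric])
  finally have "I +> (u \<otimes> v) = I +> \<one>" .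
  then have uvI: "u \<otimes> v \<ominus> \<one> \<in> I" using quot_eq[OF m_closed[OF u(1) v(1)] one_closed] by blast
  have vuU: "v \<otimes> u \<in> Units R" using one_plus_unit[OF is_ideal IJ vuI]
    unfolding plus_minus_cancel[OF m_closed[OF v(1) u(1)] one_closed] .
  have uvU: "u \<otimes> v \<in> Units R" using one_plus_unit[OF is_ideal IJ uvI]
    unfolding plus_minus_cancel[OF m_closed[OF u(1) v(1)] one_closed] .
  have uU: "u \<in> Units R" by (rule two_sided_unit[OF u(1) v(1) vuU v(1) uvU])
  have "I +> a = I +> (e \<oplus> u)" using EU a e u h.hom_add[OF e(1) u(1)] by simp
  then have jI: "a \<ominus> (e \<oplus> u) \<in> I" using quot_eq[OF a(1) add.m_closed[OF e(1) u(1)]] by blast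
  define j where "j = a \<ominus> (e \<oplus> u)"
  have jc: "j \<in> carrier R" using Icarr jI j_def by blast
  have "a = (e \<oplus> u) \<oplus> j" unfolding j_def using plus_minus_cancel a e u by simp
  also have "\<dots> = ((f \<oplus> q) \<oplus> u) \<oplus> j" using eq by simp
  also have "\<dots> = f \<oplus> (u \<oplus> (q \<oplus> j))" using fc qc u jc
    by (simp add: add.m_assoc add.m_lcomm)
  finally have aeq: "a = f \<oplus> (u \<oplus> (q \<oplus> j))" .
  have "q \<oplus> j \<in> I" unfolding j_def using additive_subgroup.a_closed[OF ideal.axioms(1)[OF is_ideal] qI jI] .
  then have "u \<oplus> (q \<oplus> j) \<in> Units R" using unit_plus[OF is_ideal IJ uU] by blast
  then have "clean_elem R a" unfolding clean_elem_def using f(1) aeq by blast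
  then have "strongly_nil_clean_elem R a" using cs a unfolding CSNC_def by blast
  then show "strongly_nil_clean_elem (R Quot I) Xq" using h.hom_snc a by simp
qed

theorem lemma2p6:
  fixes R :: "('a, 'b) ring_scheme" and I :: "'a set"
  assumes "ring R" and "ideal I R" and "I \<subseteq> jacobson_radical R"
  shows "CSNC R \<longleftrightarrow> nil_ideal I R \<and> CSNC (R Quot I)"
  using ideal.dirA[OF assms(2) _ assms(3)] ideal.dirB[OF assms(2) _ assms(3)] ideal.dirC[OF assms(2)]
  by blast

end
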